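(* Let $(\mathcal U,\mathcal F)$ be a strongly accessible set system satisfying the commutable property, let $S$ be a nonempty maximal solution with layered canonical order $s_1,\dots,s_{|S|}$, and let $1\le j\le |S|$. Then $T=\mathrm{complete}'(S[j],\mathcal U)$ is a maximal solution and $T\preceq' S$.
   Context: A set system is $(\mathcal U,\mathcal F)$ with $\mathcal U$ finite, $\mathcal F\subseteq 2^{\mathcal U}$, $\emptyset\in\mathcal F$; $S\in\mathcal F$ is maximal if no $Y\in\mathcal F$ has $S\subsetneq Y$. Strongly accessible: for all $X,Y\in\mathcal F$ with $X\subsetneq Y$ there is $z\in Y\setminus X$ with $X\cup\{z\}\in\mathcal F$. Commutable property: for all $X,Y\in\mathcal F$ with $X\ne\emptyset$, $X\subsetneq Y$, and $a,b\in Y\setminus X$, if $X\cup\{a\},X\cup\{b\}\in\mathcal F$ then $X\cup\{a,b\}\in\mathcal F$. Elements of $\mathcal U$ are distinct integers. For $X,A\subseteq\mathcal U$, $X^+_A=\{a\in A\setminus X: X\cup\{a\}\in\mathcal F\}$ and $X^+=X^+_{\mathcal U}$. $Z=\{x:\{x\}\in\mathcal F\}$, $\mathrm{source}(X)=\min(X\cap Z)$. Layers: for $X\in\mathcal F$ and $t\in X\cap Z$, set $B_0=\{t\}$ and $B_i=B_{i-1}\cup(B_{i-1}^+\cap X)$ for $i>0$; for $y\in X\cup X^+$ define $\mathrm{lay}^X_t(t)=0$ and, for $y\neq t$, $\mathrm{lay}^X_t(y)=\min\{i\ge1: y\in B_{i-1}^+\}$; write $\mathrm{lay}^X=\mathrm{lay}^X_{\mathrm{source}(X)}$.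 For nonempty $X\in\mathcal F$ and $A\subseteq\mathcal U$ with $X^+_A\ne\emptyset$, $\mathrm{choose}'(X,A)$ is the $y\in X^+_A$ minimizing the pair $(\mathrm{lay}^X(y),y)$ lexicographically. $\mathrm{complete}'(X,A)$: while $X^+_A\neq\emptyset$ replace $X$ by $X\cup\{\mathrm{choose}'(X,A)\}$; return $X$. The layered canonical order of a nonempty maximal $S$ is $s_1=\mathrm{source}(S)$, $s_{i+1}=\mathrm{choose}'(S[i],S)$ while $S[i]^+_S\ne\emptyset$, where $S[i]=\{s_1,\dots,s_i\}$. For maximal $S\neq T$ with layered canonical orders $(s_i),(t_i)$, let $j$ be the smallest index where the pairs $(\mathrm{lay}^S_{s_1}(s_j),s_j)$ and $(\mathrm{lay}^T_{t_1}(t_j),t_j)$ differ; $S\prec' T$ iff the former pair is lexicographically smaller; $S\preceq' T$ iff $S\prec'T$ or $S=T$. *)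

theory Defs
  imports Main "HOL-Library.While_Combinator"
begin

definition set_system :: "int set \<Rightarrow> int set set \<Rightarrow> bool" where
  "set_system U F \<longleftrightarrow> finite U \<and> F \<subseteq> Pow U \<and> {} \<in> F"

definition maximal_sol :: "int set set \<Rightarrow> int set \<Rightarrow> bool" where
  "maximal_sol F S \<longleftrightarrow> S \<in> F \<and> \<not> (\<exists>Y\<in>F. S \<subset> Y)"

definition strongly_accessible :: "int set set \<Rightarrow> bool" where
  "strongly_accessible F \<longleftrightarrow>
     (\<forall>X\<in>F. \<forall>Y\<in>F. X \<subset> Y \<longrightarrow> (\<exists>z\<in>Y - X. insert z X \<in> F))"

definition commutable :: "int set set \<Rightarrow> bool" where
  "commutable F \<longleftrightarrow>
     (\<forall>X\<in>F. \<forall>Y\<in>F. X \<noteq> {} \<longrightarrow> X \<subset> Y \<longrightarrow>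
        (\<forall>a\<in>Y - X. \<forall>b\<in>Y - X. insert a X \<in> F \<longrightarrow> insert b X \<in> F \<longrightarrow> X \<union> {a, b} \<in> F))"

definition ext :: "int set set \<Rightarrow> int set \<Rightarrow> int set \<Rightarrow> int set" where
  "ext F X A = {a \<in> A - X. insert a X \<in> F}"

definition singles :: "int set set \<Rightarrow> int set" where
  "singles F = {x. {x} \<in> F}"

definition source :: "int set set \<Rightarrow> int set \<Rightarrow> int" where
  "source F X = Min (X \<inter> singles F)"

fun layerB :: "int set \<Rightarrow> int set set \<Rightarrow> int set \<Rightarrow> int \<Rightarrow> nat \<Rightarrow> int set" where
  "layerB U F X t 0 = {t}"
| "layerB U F X t (Suc i) = layerB U F X t i \<union> (ext F (layerB U F X t i) U \<inter> X)"

definition lay_t :: "int set \<Rightarrow> int set set \<Rightarrow> int set \<Rightarrow> int \<Rightarrow> int \<Rightarrow> nat" where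
  "lay_t U F X t y = (if y = t then 0
      else (LEAST i. 1 \<le> i \<and> y \<in> ext F (layerB U F X t (i - 1)) U))"

definition lay :: "int set \<Rightarrow> int set set \<Rightarrow> int set \<Rightarrow> int \<Rightarrow> nat" where
  "lay U F X y = lay_t U F X (source F X) y"

definition lexless :: "nat \<times> int \<Rightarrow> nat \<times> int \<Rightarrow> bool" where
  "lexless p q \<longleftrightarrow> fst p < fst q \<or> (fst p = fst q \<and> snd p < snd q)"

definition choose' :: "int set \<Rightarrow> int set set \<Rightarrow> int set \<Rightarrow> int set \<Rightarrow> int" where
  "choose' U F X A = (THE y. y \<in> ext F X A \<and>
      (\<forall>z\<in>ext F X A. z \<noteq> y \<longrightarrow> lexless (lay U F X y, y) (lay U F X z, z)))"

definition complete' :: "int set \<Rightarrow> int set set \<Rightarrow> int set \<Rightarrow> int set \<Rightarrow> int set" where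
  "complete' U F X A = while (\<lambda>X. ext F X A \<noteq> {}) (\<lambda>X. insert (choose' U F X A) X) X"

fun canon_prefix :: "int set \<Rightarrow> int set set \<Rightarrow> int set \<Rightarrow> nat \<Rightarrow> int list" where
  "canon_prefix U F S 0 = []"
| "canon_prefix U F S (Suc 0) = [source F S]"
| "canon_prefix U F S (Suc (Suc n)) =
     (let L = canon_prefix U F S (Suc n) in
      if ext F (set L) S = {} then L else L @ [choose' U F (set L) S])"

text \<open>Layered canonical order s_1,...,s_|S| (list index i-1 holds s_i).\<close>
definition canon_order :: "int set \<Rightarrow> int set set \<Rightarrow> int set \<Rightarrow> int list" where
  "canon_order U F S = canon_prefix U F S (card S)"

definition prefix_set :: "int set \<Rightarrow> int set set \<Rightarrow> int set \<Rightarrow> nat \<Rightarrow> int set" where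
  "prefix_set U F S j = set (take j (canon_order U F S))"

definition ord_pair :: "int set \<Rightarrow> int set set \<Rightarrow> int set \<Rightarrow> nat \<Rightarrow> nat \<times> int" where
  "ord_pair U F S i = (let s = canon_order U F S in
      (lay_t U F S (s ! 0) (s ! i), s ! i))"

definition prec' :: "int set \<Rightarrow> int set set \<Rightarrow> int set \<Rightarrow> int set \<Rightarrow> bool" where
  "prec' U F S T \<longleftrightarrow> S \<noteq> T \<and>
     (\<exists>j < min (length (canon_order U F S)) (length (canon_order U F T)).
        (\<forall>i<j. ord_pair U F S i = ord_pair U F T i) \<and>
        lexless (ord_pair U F S j) (ord_pair U F T j))"

definition preceq' :: "int set \<Rightarrow> int set set \<Rightarrow> int set \<Rightarrow> int set \<Rightarrow> bool" where
  "preceq' U F S T \<longleftrightarrow> prec' U F S T \<or> S = T"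

end

theory Submission
  imports Defs "HOL-Library.Product_Lexorder"
begin


lemma lexless_iff: "lexless p q \<longleftrightarrow> p < q"
  by (cases p; cases q) (auto simp: lexless_def)

locale SS =
  fixes U :: "int set" and F :: "int set set"
  assumes sys: "set_system U F" and sa: "strongly_accessible F" and cm: "commutable F"
begin

lemma finU: "finite U" using sys by (simp add: set_system_def)
lemma subU: "X \<in> F \<Longrightarrow> X \<subseteq> U" using sys by (auto simp: set_system_def)
lemma finF: "X \<in> F \<Longrightarrow> finite X" using subU finU finite_subset by blast
lemma emptyF: "{} \<in> F" using sys by (simp add: set_system_def)

lemma sa_step: "X \<in> F \<Longrightarrow> Y \<in> F \<Longrightarrow> X \<subset> Y \<Longrightarrow> \<exists>z\<in>Y - X. insert z X \<in> F"
  using sa by (auto simp: strongly_accessible_def)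

lemma cm_step: "X \<in> F \<Longrightarrow> Y \<in> F \<Longrightarrow> X \<noteq> {} \<Longrightarrow> X \<subset> Y \<Longrightarrow> a \<in> Y - X \<Longrightarrow> b \<in> Y - X
   \<Longrightarrow> insert a X \<in> F \<Longrightarrow> insert b X \<in> F \<Longrightarrow> X \<union> {a, b} \<in> F"
  using cm unfolding commutable_def by blast

lemma cplus_aux:
  "\<forall>A. card (B - A) = n \<longrightarrow> A \<in> F \<longrightarrow> A \<noteq> {} \<longrightarrow> A \<subseteq> B \<longrightarrow> B \<in> F \<longrightarrow> B \<subseteq> Y \<longrightarrow> Y \<in> F
     \<longrightarrow> y \<in> Y \<longrightarrow> y \<notin> B \<longrightarrow> insert y A \<in> F \<longrightarrow> insert y B \<in> F"
proof (induction n)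
  case 0
  show ?case
  proof (intro allI impI)
    fix A assume h: "card (B - A) = 0" "A \<in> F" "A \<noteq> {}" "A \<subseteq> B" "B \<in> F" "B \<subseteq> Y" "Y \<in> F"
      "y \<in> Y" "y \<notin> B" "insert y A \<in> F"
    have "finite B" using h finF by blast
    then have "B - A = {}" using h(1) by simp
    then have "A = B" using h(4) by blast
    then show "insert y B \<in> F" using h by simp
  qed
next
  case (Suc n)
  show ?case
  proof (intro allI impI)
    fix A assume h: "card (B - A) = Suc n" "A \<in> F" "A \<noteq> {}" "A \<subseteq> B" "B \<in> F" "B \<subseteq> Y" "Y \<in> F"
      "y \<in> Y" "y \<notin> B" "insert y A \<in> F"
    have "A \<noteq> B" using h(1) by auto
    then have "A \<subset> B" using h(4) by blast
    then obtain z where z: "z \<in> B - A" "insert z A \<in> F" using sa_step[OF h(2) h(5)] by blast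
    have "A \<subset> Y" using h z by blast
    have zy: "z \<in> Y - A" "y \<in> Y - A" using h z by auto
    have "A \<union> {z, y} \<in> F"
      using cm_step[OF h(2) h(7) h(3) \<open>A \<subset> Y\<close> zy z(2) h(10)] .
    then have i2: "insert y (insert z A) \<in> F" by (simp add: insert_commute)
    have fB: "finite B" using h finF by blast
    have "card (B - insert z A) = n"
    proof -
      have "B - insert z A = (B - A) - {z}" by blast
      then show ?thesis using h(1) z fB by (simp add: card_Diff_singleton)
    qed
    then show "insert y B \<in> F"
    proof -
      have "insert z A \<subseteq> B" "insert z A \<noteq> {}" using h z by auto
      then show ?thesis
        using Suc.IH[rule_format, OF \<open>card (B - insert z A) = n\<close> z(2)] h i2 by blast
    qed
  qed
qed

lemma cplus:
  assumes "A \<in> F" "A \<noteq> {}" "A \<subseteq> B" "B \<in> F" "B \<subseteq> Y" "Y \<in> F" "y \<in> Y" "y \<notin> B" "insert y A \<in> F"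
  shows "insert y B \<in> F"
  using cplus_aux[of B "card (B - A)" Y y] assms by blast

lemma ext_iff: "a \<in> ext F X A \<longleftrightarrow> a \<in> A \<and> a \<notin> X \<and> insert a X \<in> F"
  by (auto simp: ext_def)

lemma layerB_mono_idx: "i \<le> k \<Longrightarrow> layerB U F X t i \<subseteq> layerB U F X t k"
proof (induction k rule: dec_induct)
  case base then show ?case by simp
next
  case (step k) then show ?case by auto
qed

lemma layerB_t: "t \<in> layerB U F X t i"
  using layerB_mono_idx[of 0 i X t] by simp

lemma layerB_sub: "t \<in> X \<Longrightarrow> layerB U F X t i \<subseteq> X"
  by (induction i) auto

lemma layerB_F:
  assumes X: "X \<in> F" and t: "t \<in> X" and tF: "{t} \<in> F"
  shows "layerB U F X t i \<in> F"
proof (induction i)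
  case 0 then show ?case using tF by simp
next
  case (Suc i)
  let ?B = "layerB U F X t i"
  let ?E = "ext F ?B U \<inter> X"
  have fE: "finite ?E" using finF[OF X] by simp
  have BX: "?B \<subseteq> X" using layerB_sub[OF t] .
  have Bne: "?B \<noteq> {}" using layerB_t by blast
  have "finite E' \<Longrightarrow> E' \<subseteq> ?E \<Longrightarrow> ?B \<union> E' \<in> F" for E'
  proof (induction E' rule: finite_induct)
    case empty show ?case using Suc.IH by simp
  next
    case (insert e E')
    have eX: "e \<in> X" and ei: "insert e ?B \<in> F" using insert.prems by (auto simp: ext_iff)
    have "e \<notin> ?B" using insert.prems by (auto simp: ext_iff)
    then have en: "e \<notin> ?B \<union> E'" using insert.hyps by blast
    have sX: "?B \<union> E' \<subseteq> X" using BX insert.prems by blast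
    have IH: "?B \<union> E' \<in> F" using insert.IH insert.prems by blast
    have "insert e (?B \<union> E') \<in> F"
      using cplus[OF Suc.IH Bne _ IH sX X eX en ei] by blast
    then show ?case by simp
  qed
  from this[OF fE] have "?B \<union> ?E \<in> F" by blast
  then show ?case by simp
qed

lemma lay_le: "y \<noteq> t \<Longrightarrow> 1 \<le> i \<Longrightarrow> y \<in> ext F (layerB U F X t (i - 1)) U \<Longrightarrow> lay_t U F X t y \<le> i"
  unfolding lay_t_def by (auto intro: Least_le)

lemma lay_ex: "y \<noteq> t \<Longrightarrow> 1 \<le> i \<Longrightarrow> y \<in> ext F (layerB U F X t (i - 1)) U \<Longrightarrow>
   1 \<le> lay_t U F X t y \<and> y \<in> ext F (layerB U F X t (lay_t U F X t y - 1)) U"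
  unfolding lay_t_def using LeastI[of "\<lambda>i. 1 \<le> i \<and> y \<in> ext F (layerB U F X t (i - 1)) U" i] by auto

lemma layer_entry: "y \<in> layerB U F X t q \<Longrightarrow> y \<noteq> t \<Longrightarrow> \<exists>i. 1 \<le> i \<and> i \<le> q \<and> y \<in> ext F (layerB U F X t (i - 1)) U"
proof (induction q)
  case 0 then show ?case by simp
next
  case (Suc q)
  show ?case
  proof (cases "y \<in> layerB U F X t q")
    case True then show ?thesis using Suc by (meson le_SucI)
  next
    case False then show ?thesis using Suc.prems by (intro exI[of _ "Suc q"]) auto
  qed
qed

lemma saturation:
  assumes X: "X \<in> F" and t: "t \<in> X" and tF: "{t} \<in> F"
  shows "\<exists>q. layerB U F X t q = X"
proof (rule ccontr)
  assume "\<not> ?thesis"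
  then have ne: "layerB U F X t q \<noteq> X" for q by blast
  have fX: "finite X" using finF[OF X] .
  have "card (layerB U F X t q) \<ge> Suc q" for q
  proof (induction q)
    case 0 show ?case using layerB_t[of t X 0] by (simp add: card_gt_0_iff)
  next
    case (Suc q)
    let ?B = "layerB U F X t q"
    have "?B \<subset> X" using layerB_sub[OF t] ne[of q] by blast
    then obtain z where z: "z \<in> X - ?B" "insert z ?B \<in> F" using sa_step[OF layerB_F[OF X t tF] X] by blast
    have zU: "z \<in> U" using subU[OF X] z by blast
    have "insert z ?B \<subseteq> layerB U F X t (Suc q)" using z zU by (auto simp: ext_iff)
    moreover have "finite (layerB U F X t (Suc q))" using layerB_sub[OF t] fX finite_subset by blast
    ultimately have "card (insert z ?B) \<le> card (layerB U F X t (Suc q))" using card_mono by blast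
    moreover have "card (insert z ?B) = Suc (card ?B)" using z fX layerB_sub[OF t]
      by (meson DiffD2 card_insert_disjoint finite_subset)
    ultimately show ?case using Suc.IH by simp
  qed
  from this[of "card X"] have "card (layerB U F X t (card X)) > card X" by simp
  moreover have "card (layerB U F X t (card X)) \<le> card X" using card_mono[OF fX layerB_sub[OF t]] .
  ultimately show False by simp
qed

lemma lay_mem:
  assumes "X \<in> F" "t \<in> X" "{t} \<in> F" "y \<in> X" "y \<noteq> t"
  shows "\<exists>i. 1 \<le> i \<and> y \<in> ext F (layerB U F X t (i - 1)) U"
  using saturation[OF assms(1-3)] layer_entry assms(4,5) by metis

lemma lay_extX:
  assumes "X \<in> F" "t \<in> X" "{t} \<in> F" "y \<in> ext F X U"
  shows "\<exists>i. 1 \<le> i \<and> y \<in> ext F (layerB U F X t (i - 1)) U"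
proof -
  obtain q where "layerB U F X t q = X" using saturation[OF assms(1-3)] by blast
  then show ?thesis using assms(4) by (intro exI[of _ "Suc q"]) auto
qed

lemma lem_mono:
  assumes X: "X \<in> F" and Y: "Y \<in> F" and t: "t \<in> X" and tF: "{t} \<in> F" and XY: "X \<subseteq> Y"
  shows "layerB U F X t q \<subseteq> layerB U F Y t q"
proof (induction q)
  case 0 then show ?case by simp
next
  case (Suc q)
  have tY: "t \<in> Y" using t XY by blast
  show ?case
  proof
    fix y assume y: "y \<in> layerB U F X t (Suc q)"
    show "y \<in> layerB U F Y t (Suc q)"
    proof (cases "y \<in> layerB U F X t q \<or> y \<in> layerB U F Y t q")
      case True then show ?thesis using Suc.IH by auto
    next
      case False
      then have y1: "y \<in> ext F (layerB U F X t q) U" "y \<in> X" using y by auto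
      have yY: "y \<in> Y" using y1 XY by blast
      have ne: "layerB U F X t q \<noteq> {}" using layerB_t by blast
      have yn: "y \<notin> layerB U F Y t q" using False by blast
      have iy: "insert y (layerB U F X t q) \<in> F" using y1 by (auto simp: ext_iff)
      have "insert y (layerB U F Y t q) \<in> F"
        using cplus[OF layerB_F[OF X t tF] ne Suc.IH layerB_F[OF Y tY tF] layerB_sub[OF tY] Y yY yn iy] .
      then show ?thesis using y1 False XY by (auto simp: ext_iff)
    qed
  qed
qed

lemma lem_sup:
  assumes X: "X \<in> F" and Y: "Y \<in> F" and t: "t \<in> X" and tF: "{t} \<in> F" and XY: "X \<subseteq> Y"
  shows "layerB U F Y t q \<subseteq> X \<Longrightarrow> layerB U F Y t q \<subseteq> layerB U F X t q"
proof (induction q)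
  case 0 then show ?case by simp
next
  case (Suc q)
  have tY: "t \<in> Y" using t XY by blast
  have sub: "layerB U F Y t q \<subseteq> X" using Suc.prems by auto
  have IH: "layerB U F Y t q \<subseteq> layerB U F X t q" using Suc.IH[OF sub] .
  show ?case
  proof
    fix y assume y: "y \<in> layerB U F Y t (Suc q)"
    have yX: "y \<in> X" using y Suc.prems by blast
    show "y \<in> layerB U F X t (Suc q)"
    proof (cases "y \<in> layerB U F Y t q \<or> y \<in> layerB U F X t q")
      case True then show ?thesis using IH by auto
    next
      case False
      then have y1: "y \<in> ext F (layerB U F Y t q) U" using y by auto
      have ne: "layerB U F Y t q \<noteq> {}" using layerB_t by blast
      have yn: "y \<notin> layerB U F X t q" using False by blast
      have iy: "insert y (layerB U F Y t q) \<in> F" using y1 by (auto simp: ext_iff)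
      have "insert y (layerB U F X t q) \<in> F"
        using cplus[OF layerB_F[OF Y tY tF] ne IH layerB_F[OF X t tF] layerB_sub[OF t] X yX yn iy] .
      then show ?thesis using y1 False yX by (auto simp: ext_iff)
    qed
  qed
qed

lemma lem_w:
  assumes X: "X \<in> F" and Y: "Y \<in> F" and t: "t \<in> X" and tF: "{t} \<in> F" and XY: "X \<subseteq> Y"
    and nsub: "\<not> layerB U F Y t r \<subseteq> X"
  shows "\<exists>w \<in> layerB U F Y t r - X. insert w X \<in> F \<and> lay_t U F X t w \<le> r"
proof -
  have tY: "t \<in> Y" using t XY by blast
  define i where "i = (LEAST i. \<not> layerB U F Y t i \<subseteq> X)"
  have ni: "\<not> layerB U F Y t i \<subseteq> X" unfolding i_def using LeastI[of _ r] nsub by metis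
  have ir: "i \<le> r" unfolding i_def using Least_le[of _ r] nsub by metis
  have "i \<noteq> 0" using ni t by auto
  then obtain i' where i': "i = Suc i'" using not0_implies_Suc by blast
  have sub: "layerB U F Y t i' \<subseteq> X" using not_less_Least[of i' "\<lambda>i. \<not> layerB U F Y t i \<subseteq> X"] i' i_def by auto
  obtain w where w: "w \<in> layerB U F Y t i" "w \<notin> X" using ni by blast
  have wn: "w \<notin> layerB U F Y t i'" using sub w by blast
  then have w1: "w \<in> ext F (layerB U F Y t i') U" "w \<in> Y" using w i' by auto
  have S: "layerB U F Y t i' \<subseteq> layerB U F X t i'" using lem_sup[OF X Y t tF XY sub] .
  have wnX: "w \<notin> layerB U F X t i'" using w layerB_sub[OF t] by blast
  have ne: "layerB U F Y t i' \<noteq> {}" using layerB_t by blast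
  have iw: "insert w (layerB U F Y t i') \<in> F" using w1 by (auto simp: ext_iff)
  have BXY: "layerB U F X t i' \<subseteq> Y" using layerB_sub[OF t] XY by blast
  have ins1: "insert w (layerB U F X t i') \<in> F"
    using cplus[OF layerB_F[OF Y tY tF] ne S layerB_F[OF X t tF] BXY Y w1(2) wnX iw] .
  have wU: "w \<in> U" using w1 by (auto simp: ext_iff)
  have "lay_t U F X t w \<le> Suc i'"
    using lay_le[of w t "Suc i'" X] w t wU ins1 wnX by (auto simp: ext_iff)
  moreover have "insert w X \<in> F"
    using cplus[OF layerB_F[OF Y tY tF] ne sub X XY Y w1(2) w(2) iw] .
  moreover have "w \<in> layerB U F Y t r" using w layerB_mono_idx[OF ir] by blast
  ultimately show ?thesis using w i' ir by auto
qed

end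



context SS
begin

lemma choose_prop:
  assumes fin: "finite (ext F X A)" and ne: "ext F X A \<noteq> {}"
  shows "choose' U F X A \<in> ext F X A \<and>
     (\<forall>z\<in>ext F X A. (lay U F X (choose' U F X A), choose' U F X A) \<le> (lay U F X z, z))"
proof -
  let ?E = "ext F X A"
  let ?g = "\<lambda>y. (lay U F X y, y)"
  have "Min (?g ` ?E) \<in> ?g ` ?E" using Min_in fin ne by blast
  then obtain y0 where y0: "y0 \<in> ?E" "?g y0 = Min (?g ` ?E)" by auto
  have mn: "\<forall>z\<in>?E. ?g y0 \<le> ?g z" using y0 fin by (auto intro: Min_le)
  have P: "\<forall>z\<in>?E. z \<noteq> y0 \<longrightarrow> lexless (?g y0) (?g z)"
  proof (intro ballI impI)
    fix z assume z: "z \<in> ?E" "z \<noteq> y0"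
    then have "?g y0 \<le> ?g z" "?g y0 \<noteq> ?g z" using mn by auto
    then show "lexless (?g y0) (?g z)" unfolding lexless_iff by (meson order_le_neq_trans)
  qed
  have "choose' U F X A = y0" unfolding choose'_def
  proof (rule the_equality)
    show "y0 \<in> ?E \<and> (\<forall>z\<in>?E. z \<noteq> y0 \<longrightarrow> lexless (?g y0) (?g z))" using y0 P by blast
  next
    fix y assume y: "y \<in> ?E \<and> (\<forall>z\<in>?E. z \<noteq> y \<longrightarrow> lexless (?g y) (?g z))"
    show "y = y0"
    proof (rule ccontr)
      assume "y \<noteq> y0"
      then have "lexless (?g y) (?g y0)" "lexless (?g y0) (?g y)" using y y0 P by auto
      then show False unfolding lexless_iff using less_asym by blast
    qed
  qed
  then show ?thesis using y0 mn by simp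
qed

lemma source_in: "S \<in> F \<Longrightarrow> S \<noteq> {} \<Longrightarrow> source F S \<in> S \<and> {source F S} \<in> F"
proof -
  assume S: "S \<in> F" "S \<noteq> {}"
  then have "{} \<subset> S" by blast
  then obtain z where "z \<in> S" "{z} \<in> F" using sa_step[OF emptyF S(1)] by auto
  then have ne: "S \<inter> singles F \<noteq> {}" by (auto simp: singles_def)
  have "finite (S \<inter> singles F)" using finF[OF S(1)] by simp
  then have "Min (S \<inter> singles F) \<in> S \<inter> singles F" using Min_in ne by blast
  then show ?thesis by (simp add: source_def singles_def)
qed

lemma source_le: "T \<in> F \<Longrightarrow> x \<in> T \<Longrightarrow> {x} \<in> F \<Longrightarrow> source F T \<le> x"
proof -
  assume h: "T \<in> F" "x \<in> T" "{x} \<in> F"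
  have f: "finite (T \<inter> singles F)" using finF[OF h(1)] by simp
  have "x \<in> T \<inter> singles F" using h by (simp add: singles_def)
  then show ?thesis unfolding source_def using Min_le[OF f] by blast
qed

lemma source_sub:
  assumes S: "S \<in> F" "S \<noteq> {}" and W: "source F S \<in> W" "W \<subseteq> S"
  shows "source F W = source F S"
proof -
  have s: "source F S \<in> W \<inter> singles F" using source_in[OF S] W by (auto simp: singles_def)
  have fW: "finite (W \<inter> singles F)" using finF[OF S(1)] W finite_subset by blast
  have fS: "finite (S \<inter> singles F)" using finF[OF S(1)] by simp
  have "Min (W \<inter> singles F) \<in> W \<inter> singles F" using Min_in[OF fW] s by blast
  then have "Min (W \<inter> singles F) \<in> S \<inter> singles F" using W by blast
  then have "Min (S \<inter> singles F) \<le> Min (W \<inter> singles F)" using Min_le[OF fS] by blast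
  moreover have "Min (W \<inter> singles F) \<le> Min (S \<inter> singles F)" using Min_le[OF fW] s by (simp add: source_def)
  ultimately show ?thesis unfolding source_def by simp
qed

lemma fin_ext: "finite (ext F X U)"
  using finU by (rule finite_subset[rotated]) (auto simp: ext_def)

lemma fin_extS: "S \<in> F \<Longrightarrow> finite (ext F X S)"
proof -
  assume "S \<in> F"
  then have "finite S" by (rule finF)
  moreover have "ext F X S \<subseteq> S" by (auto simp: ext_def)
  ultimately show ?thesis by (rule finite_subset[rotated])
qed

lemma complete_rule:
  assumes X0: "X0 \<in> F" and P0: "P X0"
    and step: "\<And>X. X \<in> F \<Longrightarrow> P X \<Longrightarrow> ext F X U \<noteq> {} \<Longrightarrow> P (insert (choose' U F X U) X)"
  shows "complete' U F X0 U \<in> F \<and> ext F (complete' U F X0 U) U = {} \<and> P (complete' U F X0 U)"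
  unfolding complete'_def
proof (rule while_rule[where P="\<lambda>X. X \<in> F \<and> P X" and r="measure (\<lambda>X. card (U - X))"])
  show "X0 \<in> F \<and> P X0" using X0 P0 by simp
next
  fix X assume h: "X \<in> F \<and> P X" "ext F X U \<noteq> {}"
  have c: "choose' U F X U \<in> ext F X U" using choose_prop[OF fin_ext h(2)] by blast
  then show "insert (choose' U F X U) X \<in> F \<and> P (insert (choose' U F X U) X)"
    using step h by (auto simp: ext_iff)
next
  fix X assume "X \<in> F \<and> P X" "\<not> ext F X U \<noteq> {}"
  then show "X \<in> F \<and> ext F X U = {} \<and> P X" by simp
next
  show "wf (measure (\<lambda>X. card (U - X)))" by simp
next
  fix X assume h: "X \<in> F \<and> P X" "ext F X U \<noteq> {}"
  have c: "choose' U F X U \<in> ext F X U" using choose_prop[OF fin_ext h(2)] by blast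
  then have cU: "choose' U F X U \<in> U - X" by (auto simp: ext_iff)
  have e: "U - insert (choose' U F X U) X = (U - X) - {choose' U F X U}" by blast
  have fd: "finite (U - X)" using finU by simp
  have "card ((U - X) - {choose' U F X U}) < card (U - X)" using card_Diff1_less[OF fd cU] .
  then show "(insert (choose' U F X U) X, X) \<in> measure (\<lambda>X. card (U - X))"
    unfolding e[symmetric] by simp
qed

lemma ext_ne: "W \<in> F \<Longrightarrow> S \<in> F \<Longrightarrow> W \<subseteq> S \<Longrightarrow> card W < card S \<Longrightarrow> ext F W S \<noteq> {}"
proof -
  assume h: "W \<in> F" "S \<in> F" "W \<subseteq> S" "card W < card S"
  then have "W \<subset> S" by auto
  then obtain z where "z \<in> S - W" "insert z W \<in> F" using sa_step h by blast
  then show ?thesis by (auto simp: ext_iff)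
qed

lemma cp_step_gen:
  assumes S: "S \<in> F" and n: "1 \<le> n" and W: "set (canon_prefix U F S n) \<in> F"
    "set (canon_prefix U F S n) \<subseteq> S" "card (set (canon_prefix U F S n)) < card S"
  shows "canon_prefix U F S (Suc n) = canon_prefix U F S n @ [choose' U F (set (canon_prefix U F S n)) S]
     \<and> choose' U F (set (canon_prefix U F S n)) S \<in> ext F (set (canon_prefix U F S n)) S"
proof -
  obtain m where m: "n = Suc m" using n by (cases n) auto
  have ne: "ext F (set (canon_prefix U F S n)) S \<noteq> {}" using ext_ne[OF W(1) S W(2,3)] .
  have "canon_prefix U F S (Suc n) = canon_prefix U F S n @ [choose' U F (set (canon_prefix U F S n)) S]"
    using ne unfolding m by (simp add: Let_def)
  then show ?thesis using choose_prop[OF fin_extS[OF S] ne] by blast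
qed

lemma cp_props:
  assumes S: "S \<in> F" "S \<noteq> {}"
  shows "1 \<le> n \<Longrightarrow> n \<le> card S \<Longrightarrow> length (canon_prefix U F S n) = n \<and> set (canon_prefix U F S n) \<subseteq> S
    \<and> set (canon_prefix U F S n) \<in> F \<and> distinct (canon_prefix U F S n) \<and> canon_prefix U F S n ! 0 = source F S"
proof (induction n)
  case 0 then show ?case by simp
next
  case (Suc n)
  show ?case
  proof (cases "n = 0")
    case True
    then show ?thesis using source_in[OF S] by simp
  next
    case False
    then have n1: "1 \<le> n" by simp
    have IH: "length (canon_prefix U F S n) = n \<and> set (canon_prefix U F S n) \<subseteq> S
      \<and> set (canon_prefix U F S n) \<in> F \<and> distinct (canon_prefix U F S n) \<and> canon_prefix U F S n ! 0 = source F S"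
      using Suc n1 by simp
    have card: "card (set (canon_prefix U F S n)) < card S" using IH Suc.prems distinct_card by fastforce
    have st: "canon_prefix U F S (Suc n) = canon_prefix U F S n @ [choose' U F (set (canon_prefix U F S n)) S]
     \<and> choose' U F (set (canon_prefix U F S n)) S \<in> ext F (set (canon_prefix U F S n)) S"
      using cp_step_gen[OF S(1) n1 _ _ card] IH by blast
    then show ?thesis using IH n1 by (auto simp: ext_iff nth_append)
  qed
qed

lemma cp_take:
  assumes S: "S \<in> F" "S \<noteq> {}"
  shows "i \<le> n \<Longrightarrow> n \<le> card S \<Longrightarrow> take i (canon_prefix U F S n) = canon_prefix U F S i"
proof (induction n)
  case 0 then show ?case by simp
next
  case (Suc n)
  show ?case
  proof (cases "i = Suc n")
    case True
    then show ?thesis using cp_props[OF S, of "Suc n"] Suc.prems by simp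
  next
    case False
    then have i: "i \<le> n" using Suc.prems by simp
    show ?thesis
    proof (cases "n = 0")
      case True then show ?thesis using i by simp
    next
      case False
      then have n1: "1 \<le> n" by simp
      have IH: "length (canon_prefix U F S n) = n \<and> set (canon_prefix U F S n) \<subseteq> S
        \<and> set (canon_prefix U F S n) \<in> F \<and> distinct (canon_prefix U F S n)"
        using cp_props[OF S n1] Suc.prems by simp
      have card: "card (set (canon_prefix U F S n)) < card S" using IH Suc.prems distinct_card by fastforce
      have st: "canon_prefix U F S (Suc n) = canon_prefix U F S n @ [choose' U F (set (canon_prefix U F S n)) S]"
        using cp_step_gen[OF S(1) n1 _ _ card] IH by blast
      then show ?thesis using Suc.IH[OF i] Suc.prems i IH by simp
    qed
  qed
qed

lemma card_ge1: "S \<in> F \<Longrightarrow> S \<noteq> {} \<Longrightarrow> 1 \<le> card S"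
proof -
  assume h: "S \<in> F" "S \<noteq> {}"
  from h(1) have "finite S" by (rule finF)
  then have "card S > 0" using h(2) by (simp add: card_gt_0_iff)
  then show ?thesis by simp
qed

lemma co_len: "S \<in> F \<Longrightarrow> S \<noteq> {} \<Longrightarrow> length (canon_order U F S) = card S"
proof -
  assume h: "S \<in> F" "S \<noteq> {}"
  show ?thesis unfolding canon_order_def using cp_props[OF h card_ge1[OF h] order_refl] by blast
qed

lemma co_take: "S \<in> F \<Longrightarrow> S \<noteq> {} \<Longrightarrow> i \<le> card S \<Longrightarrow> take i (canon_order U F S) = canon_prefix U F S i"
  unfolding canon_order_def using cp_take by blast

lemma co_set_take: "S \<in> F \<Longrightarrow> S \<noteq> {} \<Longrightarrow> i \<le> card S \<Longrightarrow>
    set (take i (canon_order U F S)) \<in> F \<and> set (take i (canon_order U F S)) \<subseteq> S"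
proof -
  assume h: "S \<in> F" "S \<noteq> {}" "i \<le> card S"
  show ?thesis
  proof (cases "i = 0")
    case True then show ?thesis using emptyF by simp
  next
    case False then show ?thesis using co_take[OF h] cp_props[OF h(1,2), of i] h by simp
  qed
qed

lemma co_set: "S \<in> F \<Longrightarrow> S \<noteq> {} \<Longrightarrow> set (canon_order U F S) = S"
proof -
  assume h: "S \<in> F" "S \<noteq> {}"
  have c: "card S \<ge> 1" using card_ge1[OF h] .
  have p: "set (canon_order U F S) \<subseteq> S" "distinct (canon_order U F S)" "length (canon_order U F S) = card S"
    using cp_props[OF h c] unfolding canon_order_def by auto
  then have "card (set (canon_order U F S)) = card S" using distinct_card by metis
  then show ?thesis using p(1) finF[OF h(1)] card_subset_eq by blast
qed

lemma co_0: "S \<in> F \<Longrightarrow> S \<noteq> {} \<Longrightarrow> canon_order U F S ! 0 = source F S"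
proof -
  assume h: "S \<in> F" "S \<noteq> {}"
  have c: "card S \<ge> 1" using card_ge1[OF h] .
  then show ?thesis using cp_props[OF h c] unfolding canon_order_def by auto
qed

lemma co_nth:
  assumes S: "S \<in> F" "S \<noteq> {}" and i: "1 \<le> i" "i < card S"
  shows "canon_order U F S ! i = choose' U F (set (take i (canon_order U F S))) S
    \<and> canon_order U F S ! i \<in> ext F (set (take i (canon_order U F S))) S"
proof -
  have IH: "length (canon_prefix U F S i) = i \<and> set (canon_prefix U F S i) \<subseteq> S
        \<and> set (canon_prefix U F S i) \<in> F \<and> distinct (canon_prefix U F S i)"
    using cp_props[OF S i(1)] i by simp
  have card: "card (set (canon_prefix U F S i)) < card S" using IH i distinct_card by fastforce
  have st: "canon_prefix U F S (Suc i) = canon_prefix U F S i @ [choose' U F (set (canon_prefix U F S i)) S]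
     \<and> choose' U F (set (canon_prefix U F S i)) S \<in> ext F (set (canon_prefix U F S i)) S"
    using cp_step_gen[OF S(1) i(1) _ _ card] IH by blast
  have t1: "take i (canon_order U F S) = canon_prefix U F S i" using co_take[OF S] i by simp
  have t2: "take (Suc i) (canon_order U F S) = canon_prefix U F S (Suc i)" using co_take[OF S] i by simp
  have "canon_order U F S ! i = take (Suc i) (canon_order U F S) ! i" by simp
  also have "\<dots> = choose' U F (set (canon_prefix U F S i)) S" using t2 st IH by (simp add: nth_append)
  finally show ?thesis using t1 st by simp
qed

end



context SS
begin

lemma H1:
  assumes S: "S \<in> F" "S \<noteq> {}" and i: "1 \<le> i" "i < card S"
  shows "lay_t U F S (canon_order U F S ! 0) (canon_order U F S ! i)
     = lay U F (set (take i (canon_order U F S))) (canon_order U F S ! i)"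
proof -
  let ?s = "canon_order U F S"
  define W where "W = set (take i ?s)"
  define c where "c = ?s ! i"
  define t where "t = source F S"
  have s0: "?s ! 0 = t" using co_0[OF S] t_def by simp
  have tS: "t \<in> S" "{t} \<in> F" using source_in[OF S] t_def by auto
  have WF: "W \<in> F" "W \<subseteq> S" using co_set_take[OF S, of i] i W_def by auto
  have len: "length ?s = card S" using co_len[OF S] .
  have "take i ?s ! 0 = ?s ! 0" using i by simp
  moreover have "0 < length (take i ?s)" using i len by simp
  ultimately have tW: "t \<in> W" unfolding W_def using s0 by (metis nth_mem)
  have srcW: "source F W = t" using source_sub[OF S] tW WF t_def by simp
  have cx: "c = choose' U F W S \<and> c \<in> ext F W S" unfolding c_def W_def using co_nth[OF S i] by metis
  have cS: "c \<in> S" and cW: "c \<notin> W" and ciW: "insert c W \<in> F" using cx by (auto simp: ext_iff)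
  have cU: "c \<in> U" using cS subU[OF S(1)] by blast
  have cext: "c \<in> ext F W U" using cS cW ciW cU by (auto simp: ext_iff)
  have ct: "c \<noteq> t" using cW tW by blast
  have layW: "\<And>v. lay U F W v = lay_t U F W t v" by (simp add: lay_def srcW)
  define e where "e = lay_t U F W t c"
  define d where "d = lay_t U F S t c"
  obtain i0 where "1 \<le> i0" "c \<in> ext F (layerB U F W t (i0 - 1)) U" using lay_extX[OF WF(1) tW tS(2) cext] by blast
  then have e1: "1 \<le> e" "c \<in> ext F (layerB U F W t (e - 1)) U" using lay_ex[OF ct] e_def by blast+
  obtain i1 where "1 \<le> i1" "c \<in> ext F (layerB U F S t (i1 - 1)) U" using lay_mem[OF S(1) tS(1) tS(2) cS ct] by blast
  then have d1: "1 \<le> d" "c \<in> ext F (layerB U F S t (d - 1)) U" using lay_ex[OF ct] d_def by blast+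
  have neW: "\<And>q. layerB U F W t q \<noteq> {}" using layerB_t by blast
  have neS: "\<And>q. layerB U F S t q \<noteq> {}" using layerB_t by blast
  have de: "d \<le> e"
  proof (cases "c \<in> layerB U F S t (e - 1)")
    case True
    obtain i' where "1 \<le> i'" "i' \<le> e - 1" "c \<in> ext F (layerB U F S t (i' - 1)) U"
      using layer_entry[OF True ct] by blast
    then have "d \<le> i'" using lay_le[OF ct] d_def by blast
    then show ?thesis using \<open>i' \<le> e - 1\<close> by simp
  next
    case False
    have mono: "layerB U F W t (e - 1) \<subseteq> layerB U F S t (e - 1)"
      using lem_mono[OF WF(1) S(1) tW tS(2) WF(2)] .
    have ins: "insert c (layerB U F W t (e - 1)) \<in> F" using e1 by (auto simp: ext_iff)
    have "insert c (layerB U F S t (e - 1)) \<in> F"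
      using cplus[OF layerB_F[OF WF(1) tW tS(2)] neW mono layerB_F[OF S(1) tS(1) tS(2)]
          layerB_sub[OF tS(1)] S(1) cS False ins] .
    then have "c \<in> ext F (layerB U F S t (e - 1)) U" using cU False by (auto simp: ext_iff)
    then show ?thesis using lay_le[OF ct e1(1)] d_def by blast
  qed
  have ed: "e \<le> d"
  proof (cases "layerB U F S t (d - 1) \<subseteq> W")
    case True
    have sup: "layerB U F S t (d - 1) \<subseteq> layerB U F W t (d - 1)"
      using lem_sup[OF WF(1) S(1) tW tS(2) WF(2) True] .
    have cn: "c \<notin> layerB U F W t (d - 1)" using cW layerB_sub[OF tW] by blast
    have BWS: "layerB U F W t (d - 1) \<subseteq> S" using layerB_sub[OF tW] WF(2) by blast
    have ins: "insert c (layerB U F S t (d - 1)) \<in> F" using d1 by (auto simp: ext_iff)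
    have "insert c (layerB U F W t (d - 1)) \<in> F"
      using cplus[OF layerB_F[OF S(1) tS(1) tS(2)] neS sup layerB_F[OF WF(1) tW tS(2)] BWS S(1) cS cn ins] .
    then have "c \<in> ext F (layerB U F W t (d - 1)) U" using cU cn by (auto simp: ext_iff)
    then show ?thesis using lay_le[OF ct d1(1)] e_def by blast
  next
    case False
    obtain w where w: "w \<in> layerB U F S t (d - 1) - W" "insert w W \<in> F" "lay_t U F W t w \<le> d - 1"
      using lem_w[OF WF(1) S(1) tW tS(2) WF(2) False] by blast
    have wS: "w \<in> S" using w(1) layerB_sub[OF tS(1)] by blast
    have wext: "w \<in> ext F W S" using w wS by (auto simp: ext_iff)
    have ne: "ext F W S \<noteq> {}" using wext by blast
    have "(lay U F W c, c) \<le> (lay U F W w, w)"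
      using choose_prop[OF fin_extS[OF S(1)] ne] wext cx by simp
    then have "e \<le> lay_t U F W t w" unfolding layW e_def by (auto)
    then show ?thesis using w(3) d1(1) by simp
  qed
  have "lay_t U F S (?s ! 0) c = d" using s0 d_def by simp
  also have "\<dots> = e" using de ed by simp
  also have "\<dots> = lay U F W c" using layW e_def by simp
  finally show ?thesis using c_def W_def by simp
qed

end



context SS
begin

lemma main:
  assumes Smax: "maximal_sol F S" and Sne: "S \<noteq> {}" and j: "1 \<le> j" "j \<le> card S"
  shows "maximal_sol F (complete' U F (prefix_set U F S j) U)
         \<and> preceq' U F (complete' U F (prefix_set U F S j) U) S"
proof -
  have SF: "S \<in> F" using Smax by (simp add: maximal_sol_def)
  have Smx: "\<And>Y. Y \<in> F \<Longrightarrow> \<not> S \<subset> Y" using Smax by (auto simp: maximal_sol_def)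
  define s where "s = canon_order U F S"
  define Sj where "Sj = prefix_set U F S j"
  have Sj': "Sj = set (take j s)" by (simp add: Sj_def s_def prefix_set_def)
  define T where "T = complete' U F Sj U"
  define t where "t = source F S"
  have tS: "t \<in> S" "{t} \<in> F" using source_in[OF SF Sne] t_def by auto
  have lens: "length s = card S" using co_len[OF SF Sne] s_def by simp
  have SjF: "Sj \<in> F" "Sj \<subseteq> S" using co_set_take[OF SF Sne j(2)] Sj' s_def by auto
  have s0: "s ! 0 = t" using co_0[OF SF Sne] s_def t_def by simp
  have tSj: "t \<in> Sj"
  proof -
    have "take j s ! 0 = s ! 0" using j by simp
    moreover have "0 < length (take j s)" using j lens by simp
    ultimately show ?thesis unfolding Sj' using s0 by (metis nth_mem)
  qed
  have CR: "T \<in> F \<and> ext F T U = {} \<and> Sj \<subseteq> T"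
    unfolding T_def by (rule complete_rule[OF SjF(1), of "\<lambda>X. Sj \<subseteq> X"]) auto
  have TF: "T \<in> F" using CR by blast
  have Tmax: "maximal_sol F T"
  proof -
    have "\<not> (\<exists>Y\<in>F. T \<subset> Y)"
    proof
      assume "\<exists>Y\<in>F. T \<subset> Y"
      then obtain Y where Y: "Y \<in> F" "T \<subset> Y" by blast
      then obtain z where z: "z \<in> Y - T" "insert z T \<in> F" using sa_step[OF TF] by blast
      have "z \<in> U" using z subU[OF Y(1)] by blast
      then have "z \<in> ext F T U" using z by (auto simp: ext_iff)
      then show False using CR by blast
    qed
    then show ?thesis using TF by (simp add: maximal_sol_def)
  qed
  have Tmx: "\<And>Y. Y \<in> F \<Longrightarrow> \<not> T \<subset> Y" using Tmax by (auto simp: maximal_sol_def)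
  have Tne: "T \<noteq> {}" using tSj CR by blast
  have pre: "preceq' U F T S"
  proof (cases "T = S")
    case True then show ?thesis by (simp add: preceq'_def)
  next
    case TS: False
    define u where "u = canon_order U F T"
    have lenu: "length u = card T" using co_len[OF TF Tne] u_def by simp
    define m where "m = min (card T) (card S)"
    have ex: "\<exists>k<m. u ! k \<noteq> s ! k"
    proof (rule ccontr)
      assume "\<not> ?thesis"
      then have eq: "\<forall>k<m. u ! k = s ! k" by simp
      have tk: "take m u = take m s"
        by (rule nth_equalityI) (use eq lenu lens m_def in auto)
      show False
      proof (cases "card T \<le> card S")
        case True
        then have "take m u = u" using lenu m_def by simp
        then have "T = set (take m s)" using co_set[OF TF Tne] u_def tk by simp
        also have "\<dots> \<subseteq> S" using co_set[OF SF Sne] s_def by (metis set_take_subset)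
        finally have "T \<subset> S" using TS by blast
        then show False using Tmx[OF SF] by blast
      next
        case False
        then have "take m s = s" using lens m_def by simp
        then have "S = set (take m u)" using co_set[OF SF Sne] s_def tk by simp
        also have "\<dots> \<subseteq> T" using co_set[OF TF Tne] u_def by (metis set_take_subset)
        finally have "S \<subset> T" using TS by blast
        then show False using Smx[OF TF] by blast
      qed
    qed
    define k where "k = (LEAST k. k < m \<and> u ! k \<noteq> s ! k)"
    have k: "k < m" "u ! k \<noteq> s ! k" using LeastI_ex[OF ex] unfolding k_def by blast+
    have before: "\<And>i. i < k \<Longrightarrow> u ! i = s ! i"
    proof -
      fix i assume i: "i < k"
      then have "\<not> (i < m \<and> u ! i \<noteq> s ! i)" using not_less_Least k_def by blast
      then show "u ! i = s ! i" using i k(1) by simp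
    qed
    have km: "k < card T" "k < card S" using k(1) m_def by auto
    have take_eq: "take k u = take k s"
      by (rule nth_equalityI) (use before lenu lens km in auto)
    have op_eq: "\<And>i. i < k \<Longrightarrow> ord_pair U F T i = ord_pair U F S i"
    proof -
      fix i assume i: "i < k"
      show "ord_pair U F T i = ord_pair U F S i"
      proof (cases "i = 0")
        case True
        have "u ! 0 = s ! 0" using before i True by simp
        then show ?thesis using True unfolding ord_pair_def Let_def u_def[symmetric] s_def[symmetric]
          by (simp add: lay_t_def)
      next
        case False
        then have i1: "1 \<le> i" by simp
        have h1: "lay_t U F T (u ! 0) (u ! i) = lay U F (set (take i u)) (u ! i)"
          using H1[OF TF Tne i1] i km u_def by simp
        have h2: "lay_t U F S (s ! 0) (s ! i) = lay U F (set (take i s)) (s ! i)"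
          using H1[OF SF Sne i1] i km s_def by simp
        have "take i u = take i s" using take_eq i by (metis min.strict_order_iff take_take)
        then show ?thesis unfolding ord_pair_def Let_def u_def[symmetric] s_def[symmetric]
          using h1 h2 before i by simp
      qed
    qed
    have lt: "lexless (ord_pair U F T k) (ord_pair U F S k)"
    proof (cases "k = 0")
      case True
      have u0: "u ! 0 = source F T" using co_0[OF TF Tne] u_def by simp
      have le: "source F T \<le> t" using source_le[OF TF _ tS(2)] tSj CR by blast
      have ne: "source F T \<noteq> t" using k(2) True u0 s0 by simp
      show ?thesis using True u0 s0 le ne unfolding ord_pair_def Let_def u_def[symmetric] s_def[symmetric]
        by (simp add: lay_t_def lexless_def)
    next
      case False
      then have k1: "1 \<le> k" by simp
      define W where "W = set (take k s)"
      have WT: "W = set (take k u)" using take_eq W_def by simp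
      have WF: "W \<in> F" "W \<subseteq> S" using co_set_take[OF SF Sne, of k] km W_def s_def by auto
      have WTsub: "W \<subseteq> T" using co_set_take[OF TF Tne, of k] km WT u_def by auto
      define z where "z = s ! k"
      define x where "x = u ! k"
      have zs: "z = choose' U F W S \<and> z \<in> ext F W S"
        unfolding z_def W_def s_def using co_nth[OF SF Sne k1 km(2)] by metis
      have xs: "x = choose' U F W T \<and> x \<in> ext F W T"
        unfolding x_def WT u_def using co_nth[OF TF Tne k1 km(1)] by metis
      have opS: "ord_pair U F S k = (lay U F W z, z)"
        using H1[OF SF Sne k1 km(2)] unfolding ord_pair_def Let_def s_def[symmetric] W_def z_def by simp
      have opT: "ord_pair U F T k = (lay U F W x, x)"
        using H1[OF TF Tne k1 km(1)] unfolding ord_pair_def Let_def u_def[symmetric] WT x_def by simp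
      have key: "\<exists>y \<in> ext F W T. (lay U F W y, y) \<le> (lay U F W z, z)"
      proof (cases "z \<in> T")
        case True
        then have "z \<in> ext F W T" using zs by (auto simp: ext_iff)
        then show ?thesis by blast
      next
        case zT: False
        have kj: "j \<le> k"
        proof (rule ccontr)
          assume "\<not> j \<le> k"
          then have "take j s ! k = s ! k" "k < length (take j s)" using km lens by auto
          then have "z \<in> Sj" unfolding Sj' z_def by (metis nth_mem)
          then show False using zT CR by blast
        qed
        have SjW: "Sj \<subseteq> W" unfolding Sj' W_def using kj by (rule set_take_subset_set_take)
        have tW: "t \<in> W" using tSj SjW by blast
        have srcW: "source F W = t" unfolding t_def by (rule source_sub[OF SF Sne]) (use tW WF t_def in auto)
        have zW: "z \<notin> W" and zS: "z \<in> S" and izW: "insert z W \<in> F" using zs by (auto simp: ext_iff)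
        have zU: "z \<in> U" using zS subU[OF SF] by blast
        have zt: "z \<noteq> t" using zW tW by blast
        have zext: "z \<in> ext F W U" using zW zU izW by (auto simp: ext_iff)
        define b where "b = lay_t U F W t z"
        have layW: "\<And>v. lay U F W v = lay_t U F W t v" by (simp add: lay_def srcW)
        obtain i0 where "1 \<le> i0" "z \<in> ext F (layerB U F W t (i0 - 1)) U"
          using lay_extX[OF WF(1) tW tS(2) zext] by blast
        then have b1: "1 \<le> b" "z \<in> ext F (layerB U F W t (b - 1)) U" using lay_ex[OF zt] b_def by blast+
        have insB: "insert z (layerB U F W t (b - 1)) \<in> F" using b1 by (auto simp: ext_iff)
        have neW: "\<And>q. layerB U F W t q \<noteq> {}" using layerB_t by blast
        define Q where "Q = (\<lambda>X. \<exists>X' y c. X' \<in> F \<and> t \<in> X' \<and> X' \<subseteq> W \<and> y \<in> X \<and> y \<notin> W \<and> 1 \<le> c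
               \<and> y \<in> ext F (layerB U F X' t (c - 1)) U \<and> (c, y) \<le> (b, z))"
        define P where "P = (\<lambda>X. Sj \<subseteq> X \<and> (X \<subseteq> W \<or> z \<in> X \<or> Q X))"
        have Qmono: "\<And>X X2. Q X \<Longrightarrow> X \<subseteq> X2 \<Longrightarrow> Q X2"
        proof -
          fix X X2 assume a: "Q X" "X \<subseteq> X2"
          then obtain X' y c where h: "X' \<in> F" "t \<in> X'" "X' \<subseteq> W" "y \<in> X" "y \<notin> W" "1 \<le> c"
               "y \<in> ext F (layerB U F X' t (c - 1)) U" "(c, y) \<le> (b, z)" unfolding Q_def by blast
          have "y \<in> X2" using h(4) a(2) by blast
          then show "Q X2" unfolding Q_def
            by (intro exI[of _ X'] exI[of _ y] exI[of _ c]) (use h in blast)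
        qed
        have CR2: "T \<in> F \<and> ext F T U = {} \<and> P T"
          unfolding T_def
        proof (rule complete_rule[OF SjF(1)])
          show "P Sj" unfolding P_def using SjW by blast
        next
          fix X assume X: "X \<in> F" "P X" "ext F X U \<noteq> {}"
          define x' where "x' = choose' U F X U"
          have cp: "x' \<in> ext F X U \<and> (\<forall>v\<in>ext F X U. (lay U F X x', x') \<le> (lay U F X v, v))"
            using choose_prop[OF fin_ext X(3)] x'_def by simp
          have SjX: "Sj \<subseteq> X" using X(2) P_def by simp
          have disj: "X \<subseteq> W \<or> z \<in> X \<or> Q X" using X(2) P_def by simp
          have SjX': "Sj \<subseteq> insert x' X" using SjX by blast
          have "P (insert x' X)"
          proof (cases "X \<subseteq> W \<and> z \<notin> X \<and> x' \<notin> W \<and> x' \<noteq> z")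
            case False
            show ?thesis
            proof (cases "X \<subseteq> W")
              case True
              then have "insert x' X \<subseteq> W \<or> z \<in> insert x' X" using False by auto
              then show ?thesis using SjX' unfolding P_def by blast
            next
              case XW: False
              then have "z \<in> X \<or> Q X" using disj by blast
              then have "z \<in> insert x' X \<or> Q (insert x' X)" using Qmono[of X "insert x' X"] by blast
              then show ?thesis using SjX' unfolding P_def by blast
            qed
          next
            case True
            then have XW: "X \<subseteq> W" and zX: "z \<notin> X" and xW: "x' \<notin> W" by auto
            have tX: "t \<in> X" using SjX tSj by blast
            have XS: "X \<subseteq> S" using XW WF by blast
            have srcX: "source F X = t" unfolding t_def by (rule source_sub[OF SF Sne]) (use tX XS t_def in auto)
            have xe: "x' \<in> ext F X U" using cp by blast
            have xt: "x' \<noteq> t" using xe tX by (auto simp: ext_iff)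
            define c where "c = lay_t U F X t x'"
            obtain i2 where "1 \<le> i2" "x' \<in> ext F (layerB U F X t (i2 - 1)) U"
              using lay_extX[OF X(1) tX tS(2) xe] by blast
            then have c1: "1 \<le> c" "x' \<in> ext F (layerB U F X t (c - 1)) U"
              using lay_ex[OF xt] c_def by blast+
            have layX: "\<And>v. lay U F X v = lay_t U F X t v" by (simp add: lay_def srcX)
            have mn: "\<forall>v\<in>ext F X U. (c, x') \<le> (lay_t U F X t v, v)" using cp layX c_def by simp
            have cb: "(c, x') \<le> (b, z)"
            proof (cases "layerB U F W t (b - 1) \<subseteq> X")
              case True
              have sup: "layerB U F W t (b - 1) \<subseteq> layerB U F X t (b - 1)"
                using lem_sup[OF X(1) WF(1) tX tS(2) XW True] .
              have zn: "z \<notin> layerB U F X t (b - 1)" using zX layerB_sub[OF tX] by blast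
              have sub1: "layerB U F X t (b - 1) \<subseteq> insert z W" using layerB_sub[OF tX] XW by blast
              have ins: "insert z (layerB U F X t (b - 1)) \<in> F"
                using cplus[OF layerB_F[OF WF(1) tW tS(2)] neW sup layerB_F[OF X(1) tX tS(2)] sub1 izW
                    insertI1 zn insB] .
              have "z \<in> ext F (layerB U F X t (b - 1)) U" using ins zn zU by (auto simp: ext_iff)
              then have lz: "lay_t U F X t z \<le> b" using lay_le[OF zt b1(1)] by blast
              have XzW: "X \<subseteq> insert z W" using XW by blast
              have insX: "insert z X \<in> F"
                using cplus[OF layerB_F[OF WF(1) tW tS(2)] neW True X(1) XzW izW insertI1 zX insB] .
              have "z \<in> ext F X U" using insX zX zU by (auto simp: ext_iff)
              then have "(c, x') \<le> (lay_t U F X t z, z)" using mn by blast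
              also have "\<dots> \<le> (b, z)" using lz by auto
              finally show ?thesis .
            next
              case False
              obtain w where w: "w \<in> layerB U F W t (b - 1) - X" "insert w X \<in> F" "lay_t U F X t w \<le> b - 1"
                using lem_w[OF X(1) WF(1) tX tS(2) XW False] by blast
              have "w \<in> W" using w(1) layerB_sub[OF tW] by blast
              then have "w \<in> U" using WF subU[OF SF] by blast
              then have "w \<in> ext F X U" using w by (auto simp: ext_iff)
              then have "(c, x') \<le> (lay_t U F X t w, w)" using mn by blast
              then have "c \<le> lay_t U F X t w" by auto
              then have "c < b" using w(3) b1(1) by simp
              then show ?thesis by simp
            qed
            have xi: "x' \<in> insert x' X" by simp
            have "Q (insert x' X)" unfolding Q_def
              by (intro exI[of _ X] exI[of _ x'] exI[of _ c]) (use X(1) tX XW xW c1 cb xi in blast)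
            then show ?thesis using SjX' unfolding P_def by blast
          qed
          then show "P (insert (choose' U F X U) X)" using x'_def by simp
        qed
        have TnW: "\<not> T \<subseteq> W"
        proof
          assume "T \<subseteq> W"
          then have "T \<subset> S" using WF TS by blast
          then show False using Tmx[OF SF] by blast
        qed
        have "Q T" using CR2 zT TnW unfolding P_def by blast
        then obtain X' y c where Xy: "X' \<in> F" "t \<in> X'" "X' \<subseteq> W" "y \<in> T" "y \<notin> W" "1 \<le> c"
            "y \<in> ext F (layerB U F X' t (c - 1)) U" "(c, y) \<le> (b, z)"
          unfolding Q_def by blast
        have mono: "layerB U F X' t (c - 1) \<subseteq> layerB U F W t (c - 1)"
          using lem_mono[OF Xy(1) WF(1) Xy(2) tS(2) Xy(3)] .
        have yn: "y \<notin> layerB U F W t (c - 1)" using Xy(5) layerB_sub[OF tW] by blast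
        have BWT: "layerB U F W t (c - 1) \<subseteq> T" using layerB_sub[OF tW] WTsub by blast
        have insy: "insert y (layerB U F X' t (c - 1)) \<in> F" using Xy(7) by (auto simp: ext_iff)
        have neX: "layerB U F X' t (c - 1) \<noteq> {}" using layerB_t by blast
        have ins1: "insert y (layerB U F W t (c - 1)) \<in> F"
          using cplus[OF layerB_F[OF Xy(1) Xy(2) tS(2)] neX mono layerB_F[OF WF(1) tW tS(2)] BWT TF Xy(4) yn insy] .
        have yU: "y \<in> U" using Xy(7) by (auto simp: ext_iff)
        have yt: "y \<noteq> t" using Xy(5) tW by blast
        have "y \<in> ext F (layerB U F W t (c - 1)) U" using ins1 yn yU by (auto simp: ext_iff)
        then have ly: "lay_t U F W t y \<le> c" using lay_le[OF yt Xy(6)] by blast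
        have insW: "insert y W \<in> F"
          using cplus[OF layerB_F[OF WF(1) tW tS(2)] neW layerB_sub[OF tW] WF(1) WTsub TF Xy(4) Xy(5) ins1] .
        have yext: "y \<in> ext F W T" using insW Xy(4) Xy(5) by (auto simp: ext_iff)
        have "(lay U F W y, y) \<le> (c, y)" using ly layW by auto
        also have "\<dots> \<le> (b, z)" using Xy(8) .
        also have "\<dots> = (lay U F W z, z)" using layW b_def by simp
        finally show ?thesis using yext by blast
      qed
      then obtain y where y: "y \<in> ext F W T" "(lay U F W y, y) \<le> (lay U F W z, z)" by blast
      have ne: "ext F W T \<noteq> {}" using y by blast
      have "(lay U F W x, x) \<le> (lay U F W y, y)"
        using choose_prop[OF fin_extS[OF TF] ne] y xs by simp
      then have le: "(lay U F W x, x) \<le> (lay U F W z, z)" using y(2) by (rule order_trans)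
      have "x \<noteq> z" using k(2) x_def z_def by simp
      then have "(lay U F W x, x) < (lay U F W z, z)" using le by (auto simp: less_le)
      then show ?thesis using opS opT by (simp add: lexless_iff)
    qed
    have "k < min (length u) (length s)" using k(1) lenu lens m_def by simp
    then have "prec' U F T S" unfolding prec'_def using TS op_eq lt u_def s_def by blast
    then show ?thesis by (simp add: preceq'_def)
  qed
  show ?thesis using Tmax pre T_def Sj_def by simp
qed

end


theorem mainTheorem7:
  fixes U :: "int set" and F :: "int set set" and S :: "int set" and j :: nat
  assumes "set_system U F"
    and "strongly_accessible F"
    and "commutable F"
    and "maximal_sol F S" and "S \<noteq> {}"
    and "1 \<le> j" and "j \<le> card S"
  shows "maximal_sol F (complete' U F (prefix_set U F S j) U)
         \<and> preceq' U F (complete' U F (prefix_set U F S j) U) S"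
proof -
  have "SS U F" using assms(1-3) by (simp add: SS_def)
  then show ?thesis using SS.main assms(4-7) by blast
qed

end
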